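(* In the discrete setting of the context, let $\varphi$ be a twice continuously differentiable convex function on $(0,+\infty)$, let $(\rho_K^n)_{K\in\mathcal M,0\le n\le N}$ be positive, $\rho_\sigma^n$ face densities and $u_{K,\sigma}^n$ normal velocities, $F_{K,\sigma}^n=|\sigma|\rho_\sigma^nu_{K,\sigma}^n$, and define for $K\in\mathcal M$, $0\le n\le N-1$, \[ |K|\,R_K^{n+1}=\bigl(\varphi'(\rho_K^{n+1})-\varphi'(\rho_K^n)\bigr)\sum_{\sigma\in\mathcal{E}(K)}F_{K,\sigma}^n. \] Let $M>1$ and suppose $\rho_K^n\le M$, $1/\rho_K^n\le M$ and $|u_{K,\sigma}^n|\le M$ for all $K$, $\sigma\in\mathcal{E}(K)$, $0\le n\le N$. Let $|\varphi''|_\infty$ be the maximum of $\varphi''$ on $[1/M,M]$. Then \[ \|R\|_{L^1}:=\sum_{n=0}^{N-1}\delta t\sum_{K\in\mathcal M}|K|\,|R_K^{n+1}|\le M^2\,|\varphi''|_\infty\,\|\rho\|_{t,BV}\,\frac{\delta t}{\underline h_{\mathcal M}}. \]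
   Context: Setting: $\Omega\subset\mathbb{R}^d$ bounded, $\mathcal M$ a polytopal mesh with cells $K$, faces of $K$ denoted $\mathcal E(K)$, measures $|K|$, $|\sigma|$; uniform time step $\delta t$, times $t_n$, $0\le n\le N$. $\underline h_{\mathcal M}=\min_{K\in\mathcal M}|K|/\sum_{\sigma\in\mathcal{E}(K)}|\sigma|$. Time BV semi-norm: $\|z\|_{t,BV}=\sum_{n=0}^{N-1}\sum_{K\in\mathcal M}|K|\,|z_K^{n+1}-z_K^n|$. *)

theory Defs
  imports "HOL-Analysis.Analysis"
begin

definition h_low :: "'c set \<Rightarrow> ('c \<Rightarrow> 'f set) \<Rightarrow> ('c \<Rightarrow> real) \<Rightarrow> ('f \<Rightarrow> real) \<Rightarrow> real" where
  "h_low Mesh E vol area = Min ((\<lambda>K. vol K / (\<Sum>s\<in>E K. area s)) ` Mesh)"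

definition tBV :: "'c set \<Rightarrow> ('c \<Rightarrow> real) \<Rightarrow> nat \<Rightarrow> ('c \<Rightarrow> nat \<Rightarrow> real) \<Rightarrow> real" where
  "tBV Mesh vol N z = (\<Sum>n<N. \<Sum>K\<in>Mesh. vol K * \<bar>z K (Suc n) - z K n\<bar>)"

definition flux :: "('f \<Rightarrow> real) \<Rightarrow> ('f \<Rightarrow> nat \<Rightarrow> real) \<Rightarrow> ('c \<Rightarrow> 'f \<Rightarrow> nat \<Rightarrow> real) \<Rightarrow> 'c \<Rightarrow> 'f \<Rightarrow> nat \<Rightarrow> real" where
  "flux area rhos u K s n = area s * rhos s n * u K s n"

definition remR :: "('c \<Rightarrow> 'f set) \<Rightarrow> ('c \<Rightarrow> real) \<Rightarrow> ('f \<Rightarrow> real) \<Rightarrow> (real \<Rightarrow> real)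
   \<Rightarrow> ('c \<Rightarrow> nat \<Rightarrow> real) \<Rightarrow> ('f \<Rightarrow> nat \<Rightarrow> real) \<Rightarrow> ('c \<Rightarrow> 'f \<Rightarrow> nat \<Rightarrow> real) \<Rightarrow> 'c \<Rightarrow> nat \<Rightarrow> real" where
  "remR E vol area phi' rho rhos u K n =
     (phi' (rho K n) - phi' (rho K (n - 1))) * (\<Sum>s\<in>E K. flux area rhos u K s (n - 1)) / vol K"

end

theory Submission
  imports Defs
begin

lemma phi'_mono:
  fixes phi phi' :: "real \<Rightarrow> real"
  assumes d1: "\<And>x. x > 0 \<Longrightarrow> (phi has_real_derivative phi' x) (at x)"
    and cvx: "convex_on {0<..} phi" and ab: "0 < a" "a \<le> b"
  shows "phi' a \<le> phi' b"
proof -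
  have i: "interior {0::real<..} = {0<..}" by (simp add: interior_open)
  have 1: "phi b - phi a \<ge> phi' a * (b - a)"
    by (rule convex_on_imp_above_tangent[OF cvx _ _ _ has_field_derivative_at_within[OF d1[OF ab(1)]]]) (use ab i in auto)
  have b0: "b > 0" using ab by simp
  have 2: "phi a - phi b \<ge> phi' b * (a - b)"
    by (rule convex_on_imp_above_tangent[OF cvx _ _ _ has_field_derivative_at_within[OF d1[OF b0]]]) (use ab b0 i in auto)
  show ?thesis
  proof (cases "a = b")
    case False
    with ab have "b - a > 0" by simp
    from 1 2 have "phi' a * (b - a) \<le> phi' b * (b - a)" by (simp add: algebra_simps)
    with \<open>b - a > 0\<close> show ?thesis by simp
  qed simp
qed

lemma phi'_lip:
  fixes phi phi' phi'' :: "real \<Rightarrow> real"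
  assumes d1: "\<And>x. x > 0 \<Longrightarrow> (phi has_real_derivative phi' x) (at x)"
    and d2: "\<And>x. x > 0 \<Longrightarrow> (phi' has_real_derivative phi'' x) (at x)"
    and cvx: "convex_on {0<..} phi" and M: "M > 1"
    and bdd: "bdd_above (phi'' ` {1/M..M})"
    and a: "1/M \<le> a" "a \<le> M" and b: "1/M \<le> b" "b \<le> M"
  shows "\<bar>phi' b - phi' a\<bar> \<le> Sup (phi'' ` {1/M..M}) * \<bar>b - a\<bar>"
proof -
  have key: "\<bar>phi' y - phi' x\<bar> \<le> Sup (phi'' ` {1/M..M}) * \<bar>y - x\<bar>"
    if xy: "x < y" "1/M \<le> x" "y \<le> M" for x y
  proof -
    have "1/M > 0" using M by simp
    hence x0: "x > 0" using xy by linarith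
    obtain z where z: "x < z" "z < y" "phi' y - phi' x = (y - x) * phi'' z"
      using MVT2[OF xy(1), of phi' phi''] d2 x0 by force
    have "phi' x \<le> phi' y" by (rule phi'_mono[OF d1 cvx x0]) (use xy in auto)
    hence "(y - x) * phi'' z \<ge> 0" using z(3) by simp
    hence "phi'' z \<ge> 0" using xy by (simp add: zero_le_mult_iff)
    have "phi'' z \<le> Sup (phi'' ` {1/M..M})"
      by (rule cSup_upper[OF _ bdd]) (use z xy in auto)
    hence "(y - x) * phi'' z \<le> (y - x) * Sup (phi'' ` {1/M..M})"
      using xy by (intro mult_left_mono) auto
    moreover have "\<bar>phi' y - phi' x\<bar> = (y - x) * phi'' z"
      using z(3) \<open>phi'' z \<ge> 0\<close> xy by simp
    ultimately show ?thesis using xy by (simp add: mult.commute)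
  qed
  show ?thesis
  proof (cases a b rule: linorder_cases)
    case less then show ?thesis using key[OF less a(1) b(2)] by simp
  next
    case greater
    have "\<bar>phi' a - phi' b\<bar> \<le> Sup (phi'' ` {1/M..M}) * \<bar>a - b\<bar>" by (rule key[OF greater b(1) a(2)])
    then show ?thesis by (metis abs_minus_commute)
  qed simp
qed

theorem lemma3p3:
  fixes Mesh :: "'c set" and E :: "'c \<Rightarrow> 'f set"
    and vol :: "'c \<Rightarrow> real" and area :: "'f \<Rightarrow> real"
    and N :: nat and dt :: real
    and phi phi' phi'' :: "real \<Rightarrow> real"
    and rho :: "'c \<Rightarrow> nat \<Rightarrow> real" and rhos :: "'f \<Rightarrow> nat \<Rightarrow> real"
    and u :: "'c \<Rightarrow> 'f \<Rightarrow> nat \<Rightarrow> real" and M :: real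
  assumes mesh_fin: "finite Mesh" and mesh_ne: "Mesh \<noteq> {}"
    and faces_fin: "\<And>K. K \<in> Mesh \<Longrightarrow> finite (E K)"
    and faces_ne: "\<And>K. K \<in> Mesh \<Longrightarrow> E K \<noteq> {}"
    and vol_pos: "\<And>K. K \<in> Mesh \<Longrightarrow> vol K > 0"
    and area_pos: "\<And>K s. K \<in> Mesh \<Longrightarrow> s \<in> E K \<Longrightarrow> area s > 0"
    and dt_pos: "dt > 0"
    and d1: "\<And>x. x > 0 \<Longrightarrow> (phi has_real_derivative phi' x) (at x)"
    and d2: "\<And>x. x > 0 \<Longrightarrow> (phi' has_real_derivative phi'' x) (at x)"
    and c2: "continuous_on {0<..} phi''"
    and cvx: "convex_on {0<..} phi"
    and rho_pos: "\<And>K n. K \<in> Mesh \<Longrightarrow> n \<le> N \<Longrightarrow> rho K n > 0"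
    and rhos_interp: "\<And>K s n. K \<in> Mesh \<Longrightarrow> s \<in> E K \<Longrightarrow> n \<le> N \<Longrightarrow>
        \<exists>K1\<in>Mesh. \<exists>K2\<in>Mesh. rho K1 n \<le> rhos s n \<and> rhos s n \<le> rho K2 n"
    and M_gt: "M > 1"
    and rho_le: "\<And>K n. K \<in> Mesh \<Longrightarrow> n \<le> N \<Longrightarrow> rho K n \<le> M"
    and rho_inv_le: "\<And>K n. K \<in> Mesh \<Longrightarrow> n \<le> N \<Longrightarrow> 1 / rho K n \<le> M"
    and u_le: "\<And>K s n. K \<in> Mesh \<Longrightarrow> s \<in> E K \<Longrightarrow> n \<le> N \<Longrightarrow> \<bar>u K s n\<bar> \<le> M"
  shows "(\<Sum>n<N. dt * (\<Sum>K\<in>Mesh. vol K * \<bar>remR E vol area phi' rho rhos u K (Suc n)\<bar>))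
     \<le> M\<^sup>2 * Sup (phi'' ` {1/M..M}) * tBV Mesh vol N rho * (dt / h_low Mesh E vol area)"
proof -
  define S where "S = Sup (phi'' ` {1/M..M})"
  define h where "h = h_low Mesh E vol area"
  have M0: "M > 0" using M_gt by simp
  have "1/M > 0" using M0 by simp
  have sub: "{1/M..M} \<subseteq> {0<..}"
  proof
    fix x assume "x \<in> {1/M..M}"
    hence "1/M \<le> x" by simp
    thus "x \<in> {0<..}" using \<open>1/M > 0\<close> by (metis greaterThan_iff less_le_trans)
  qed
  have bdd: "bdd_above (phi'' ` {1/M..M})"
    by (intro bounded_imp_bdd_above compact_imp_bounded compact_continuous_image
        continuous_on_subset[OF c2 sub]) simp
  have Apos: "(\<Sum>s\<in>E K. area s) > 0" if "K \<in> Mesh" for K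
    using that faces_fin faces_ne area_pos by (intro sum_pos) auto
  have fin_img: "finite ((\<lambda>K. vol K / (\<Sum>s\<in>E K. area s)) ` Mesh)" using mesh_fin by simp
  have h_le: "h \<le> vol K / (\<Sum>s\<in>E K. area s)" if "K \<in> Mesh" for K
    unfolding h_def h_low_def using that fin_img by (intro Min_le) auto
  have h_pos: "h > 0"
    unfolding h_def h_low_def using fin_img mesh_ne vol_pos Apos
    by (subst Min_gr_iff) auto
  have A_le: "(\<Sum>s\<in>E K. area s) \<le> vol K / h" if "K \<in> Mesh" for K
  proof -
    have "h * (\<Sum>s\<in>E K. area s) \<le> vol K"
      using h_le[OF that] Apos[OF that] by (simp add: pos_le_divide_eq)
    thus ?thesis using h_pos by (simp add: pos_le_divide_eq mult.commute)
  qed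
  have rhoM: "1/M \<le> rho K n" if "K \<in> Mesh" "n \<le> N" for K n
  proof -
    have "1 / rho K n \<le> M" by (rule rho_inv_le[OF that])
    thus ?thesis using rho_pos[OF that] M0
      by (simp add: divide_le_eq mult.commute)
  qed
  have tm: "vol K * \<bar>remR E vol area phi' rho rhos u K (Suc n)\<bar>
      \<le> M\<^sup>2 * S * (vol K * \<bar>rho K (Suc n) - rho K n\<bar>) / h"
    if K: "K \<in> Mesh" and n: "n < N" for K n
  proof -
    let ?D = "phi' (rho K (Suc n)) - phi' (rho K n)"
    let ?F = "\<Sum>s\<in>E K. flux area rhos u K s n"
    let ?A = "\<Sum>s\<in>E K. area s"
    have v: "vol K > 0" using vol_pos K by simp
    have eq: "vol K * \<bar>remR E vol area phi' rho rhos u K (Suc n)\<bar> = \<bar>?D\<bar> * \<bar>?F\<bar>"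
      unfolding remR_def using v by (simp add: abs_mult abs_divide)
    have fl: "\<bar>flux area rhos u K s n\<bar> \<le> area s * M\<^sup>2" if s: "s \<in> E K" for s
    proof -
      obtain K1 K2 where k: "K1 \<in> Mesh" "K2 \<in> Mesh" "rho K1 n \<le> rhos s n" "rhos s n \<le> rho K2 n"
        using rhos_interp[OF K s, of n] n by auto
      have "rhos s n > 0" using rho_pos[OF k(1), of n] n k by simp
      moreover have "rhos s n \<le> M" using rho_le[OF k(2), of n] n k by simp
      ultimately have r: "\<bar>rhos s n\<bar> \<le> M" by simp
      have uu: "\<bar>u K s n\<bar> \<le> M" using u_le[OF K s, of n] n by simp
      have a: "area s > 0" using area_pos[OF K s] .
      have "\<bar>rhos s n * u K s n\<bar> \<le> M * M"
        unfolding abs_mult by (rule mult_mono[OF r uu]) (use M0 in auto)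
      thus ?thesis unfolding flux_def using a
        by (simp add: abs_mult power2_eq_square mult.assoc)
    qed
    have F: "\<bar>?F\<bar> \<le> M\<^sup>2 * ?A"
    proof -
      have "\<bar>?F\<bar> \<le> (\<Sum>s\<in>E K. \<bar>flux area rhos u K s n\<bar>)" by (rule sum_abs)
      also have "\<dots> \<le> (\<Sum>s\<in>E K. area s * M\<^sup>2)" by (rule sum_mono) (rule fl)
      finally show ?thesis by (simp add: sum_distrib_right mult.commute)
    qed
    have F2: "\<bar>?F\<bar> \<le> M\<^sup>2 * (vol K / h)"
      using F A_le[OF K] by (smt (verit) mult_left_mono zero_le_power2)
    have D: "\<bar>?D\<bar> \<le> S * \<bar>rho K (Suc n) - rho K n\<bar>"
      unfolding S_def
      by (rule phi'_lip[OF d1 d2 cvx M_gt bdd])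
         (use rhoM[OF K] rho_le[OF K] n in auto)
    have "\<bar>?D\<bar> * \<bar>?F\<bar> \<le> \<bar>?D\<bar> * (M\<^sup>2 * (vol K / h))"
      by (rule mult_left_mono[OF F2]) simp
    also have "\<dots> \<le> S * \<bar>rho K (Suc n) - rho K n\<bar> * (M\<^sup>2 * (vol K / h))"
      by (rule mult_right_mono[OF D]) (use v h_pos in simp)
    also have "\<dots> = M\<^sup>2 * S * (vol K * \<bar>rho K (Suc n) - rho K n\<bar>) / h" by simp
    finally show ?thesis using eq by simp
  qed
  have "(\<Sum>n<N. dt * (\<Sum>K\<in>Mesh. vol K * \<bar>remR E vol area phi' rho rhos u K (Suc n)\<bar>))
      \<le> (\<Sum>n<N. dt * (\<Sum>K\<in>Mesh. M\<^sup>2 * S * (vol K * \<bar>rho K (Suc n) - rho K n\<bar>) / h))"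
    by (intro sum_mono mult_left_mono) (use tm dt_pos in auto)
  also have "\<dots> = M\<^sup>2 * S * tBV Mesh vol N rho * (dt / h)"
    unfolding tBV_def by (simp add: sum_distrib_left sum_divide_distrib[symmetric] sum_distrib_right mult_ac)
  finally show ?thesis unfolding S_def h_def .
qed

end
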